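(* Let $C$ be a linear $[n,k]_q$-code (a $k$-dimensional subspace of $\mathbb F_q^n$, $1\le k\le n$) and let $r$ be an integer with $1\le r\le k$. Then $$d_r(C)\ge\frac{d(C)\,\Delta_r(C)+e(C)\,(q^r-1-\Delta_r(C))}{q^r-q^{r-1}}.$$
   Context: For $x\in\mathbb F_q^n$, $\|x\|=|\{i:x_i\ne0\}|$ is the Hamming norm; for $D\subseteq\mathbb F_q^n$, $\mathrm{supp}(D)=\{i: x_i\ne0\text{ for some }x\in D\}$ and $\|D\|=|\mathrm{supp}(D)|$. $d(C)=\min\{\|x\|: 0\ne x\in C\}$ and $d_r(C)=\min\{\|D\|: D\text{ a subspace of }C,\ \dim D=r\}$. For a subspace $D$ of $C$, $\Delta(D)=|\{x\in D:\|x\|=d(C)\}|$, and $\Delta_r(C)=\max\{\Delta(D): D\text{ a subspace of }C,\ \dim D=r\}$. Let $S_C=\{\|x\|: x\in C,\ \|x\|>d(C)\}$; $e(C)=\min S_C$ if $S_C\ne\emptyset$ and $e(C)=d(C)$ otherwise. *)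

theory Defs
  imports "HOL-Analysis.Analysis"
begin

text \<open>Linear codes over a finite field 'a (q = CARD('a)), vectors in 'a^'n (n = CARD('n)).
Subspaces and dimension are those of the vector space interpretation vec (scaling (*s)).\<close>

definition hnorm :: "'a::field ^ 'n \<Rightarrow> nat" where
  "hnorm x = card {i. x $ i \<noteq> 0}"

definition csupp :: "('a::field ^ 'n) set \<Rightarrow> 'n set" where
  "csupp D = {i. \<exists>x\<in>D. x $ i \<noteq> 0}"

definition snorm :: "('a::field ^ 'n) set \<Rightarrow> nat" where
  "snorm D = card (csupp D)"

definition mindist :: "('a::field ^ 'n) set \<Rightarrow> nat" where
  "mindist C = Min {hnorm x | x. x \<in> C \<and> x \<noteq> 0}"

definition subcodes :: "('a::field ^ 'n) set \<Rightarrow> nat \<Rightarrow> ('a ^ 'n) set set" where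
  "subcodes C r = {D. vec.subspace D \<and> D \<subseteq> C \<and> vec.dim D = r}"

definition ghw :: "('a::field ^ 'n) set \<Rightarrow> nat \<Rightarrow> nat" where
  "ghw C r = Min {snorm D | D. D \<in> subcodes C r}"

definition Delta :: "('a::field ^ 'n) set \<Rightarrow> ('a ^ 'n) set \<Rightarrow> nat" where
  "Delta C D = card {x \<in> D. hnorm x = mindist C}"

definition Delta_r :: "('a::field ^ 'n) set \<Rightarrow> nat \<Rightarrow> nat" where
  "Delta_r C r = Max {Delta C D | D. D \<in> subcodes C r}"

definition S_C :: "('a::field ^ 'n) set \<Rightarrow> nat set" where
  "S_C C = {hnorm x | x. x \<in> C \<and> hnorm x > mindist C}"

definition e_C :: "('a::field ^ 'n) set \<Rightarrow> nat" where
  "e_C C = (if S_C C \<noteq> {} then Min (S_C C) else mindist C)"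

end

theory Submission imports Defs begin

lemma card_span_indep:
  fixes B :: "('a::{finite,field} ^ 'n) set"
  assumes "vec.independent B"
  shows "card (vec.span B) = CARD('a) ^ card B"
proof -
  have "finite B" using assms vec.finiteI_independent by blast
  from this assms show ?thesis
  proof (induction B rule: finite_induct)
    case empty
    then show ?case by simp
  next
    case (insert b B)
    have nb: "b \<notin> vec.span B" and iB: "vec.independent B"
      using insert.prems insert.hyps vec.independent_insert[of b B] by simp_all
    have eq: "vec.span (insert b B) = (\<lambda>(c,y). c *s b + y) ` (UNIV \<times> vec.span B)"
    proof
      show "vec.span (insert b B) \<subseteq> (\<lambda>(c,y). c *s b + y) ` (UNIV \<times> vec.span B)"
      proof
        fix x assume "x \<in> vec.span (insert b B)"
        then obtain c where "x - c *s b \<in> vec.span B" unfolding vec.span_insert by blast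
        then show "x \<in> (\<lambda>(c,y). c *s b + y) ` (UNIV \<times> vec.span B)"
          by (intro image_eqI[of _ _ "(c, x - c *s b)"]) auto
      qed
    next
      show "(\<lambda>(c,y). c *s b + y) ` (UNIV \<times> vec.span B) \<subseteq> vec.span (insert b B)"
      proof clarify
        fix c y assume y: "y \<in> vec.span B"
        have "b \<in> vec.span (insert b B)" by (simp add: vec.span_base)
        moreover have "y \<in> vec.span (insert b B)"
          using y vec.span_mono[of B "insert b B"] by blast
        ultimately show "c *s b + y \<in> vec.span (insert b B)"
          by (simp add: vec.span_add vec.span_scale)
      qed
    qed
    have inj: "inj_on (\<lambda>(c,y). c *s b + y) (UNIV \<times> vec.span B)"
    proof (rule inj_onI, clarsimp)
      fix c y c' y'
      assume y: "y \<in> vec.span B" and y': "y' \<in> vec.span B" and e: "c *s b + y = c' *s b + y'"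
      show "c = c' \<and> y = y'"
      proof (cases "c = c'")
        case True then show ?thesis using e by simp
      next
        case False
        have "(c - c') *s b = y' - y" using e by (simp add: algebra_simps vector_sub_rdistrib)
        then have "b = (inverse (c - c')) *s (y' - y)" using False
          by (metis (no_types, lifting) eq_iff_diff_eq_0 vector_smult_assoc vector_smult_lid field_class.field_inverse)
        then have "b \<in> vec.span B" using y y' by (simp add: vec.span_scale vec.span_diff)
        then show ?thesis using nb by simp
      qed
    qed
    have "card (vec.span (insert b B)) = CARD('a) * card (vec.span B)"
      unfolding eq card_image[OF inj] card_cartesian_product by simp
    then show ?case using insert iB by simp
  qed
qed

lemma card_fiber:
  fixes D :: "('a::{finite,field} ^ 'n) set"
  assumes D: "vec.subspace D" and v: "v \<in> D" and vi: "v $ i \<noteq> 0"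
  shows "card D = CARD('a) * card {x\<in>D. x $ i = 0}"
proof -
  let ?K = "{x\<in>D. x $ i = 0}"
  have eq: "D = (\<lambda>(c,y). c *s v + y) ` (UNIV \<times> ?K)"
  proof
    show "D \<subseteq> (\<lambda>(c,y). c *s v + y) ` (UNIV \<times> ?K)"
    proof
      fix x assume x: "x \<in> D"
      let ?c = "x $ i / v $ i"
      have "x - ?c *s v \<in> D" using x v D by (simp add: vec.subspace_diff vec.subspace_scale)
      moreover have "(x - ?c *s v) $ i = 0" using vi by simp
      ultimately show "x \<in> (\<lambda>(c,y). c *s v + y) ` (UNIV \<times> ?K)"
        by (intro image_eqI[of _ _ "(?c, x - ?c *s v)"]) auto
    qed
  next
    show "(\<lambda>(c,y). c *s v + y) ` (UNIV \<times> ?K) \<subseteq> D"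
      using D v by (auto simp: vec.subspace_add vec.subspace_scale)
  qed
  have inj: "inj_on (\<lambda>(c,y). c *s v + y) (UNIV \<times> ?K)"
  proof (rule inj_onI, clarsimp)
    fix c y c' y'
    assume y: "y $ i = 0" and y': "y' $ i = 0" and e: "c *s v + y = c' *s v + y'"
    have "(c *s v + y) $ i = (c' *s v + y') $ i" using e by simp
    then have "c * v $ i = c' * v $ i" using y y' by simp
    then have "c = c'" using vi by simp
    then show "c = c' \<and> y = y'" using e by simp
  qed
  show ?thesis
    by (subst eq) (simp add: card_image[OF inj] card_cartesian_product)
qed

lemma card_subspace:
  fixes D :: "('a::{finite,field} ^ 'n) set"
  assumes D: "vec.subspace D"
  shows "card D = CARD('a) ^ vec.dim D"
proof -
  obtain B where B: "B \<subseteq> D" "vec.independent B" "D \<subseteq> vec.span B" "card B = vec.dim D"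
    using vec.basis_exists by blast
  have "vec.span B = D" using B D vec.span_minimal by blast
  then show ?thesis using card_span_indep[OF B(2)] B(4) by simp
qed

lemma card_nonzero_coord:
  fixes D :: "('a::{finite,field} ^ 'n) set"
  assumes D: "vec.subspace D" and r: "vec.dim D = r" "1 \<le> r" and v: "v \<in> D" and vi: "v $ i \<noteq> 0"
  shows "card {x\<in>D. x $ i \<noteq> 0} = CARD('a) ^ r - CARD('a) ^ (r - 1)"
proof -
  let ?K = "{x\<in>D. x $ i = 0}"
  have cD: "card D = CARD('a) ^ r" using card_subspace[OF D] r by simp
  have f: "card D = CARD('a) * card ?K" by (rule card_fiber[OF D v vi])
  have "CARD('a) ^ r = CARD('a) * CARD('a) ^ (r - 1)" using r
    by (metis Suc_diff_le diff_Suc_1 power_Suc)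
  then have cK: "card ?K = CARD('a) ^ (r - 1)" using cD f by simp
  have "{x\<in>D. x $ i \<noteq> 0} = D - ?K" by auto
  moreover have "finite D" by simp
  ultimately show ?thesis using cD cK by (simp add: card_Diff_subset)
qed

lemma sum_hnorm:
  fixes D :: "('a::{finite,field} ^ 'n) set"
  assumes D: "vec.subspace D" and r: "vec.dim D = r" "1 \<le> r"
  shows "(\<Sum>x\<in>D. hnorm x) = snorm D * (CARD('a) ^ r - CARD('a) ^ (r - 1))"
proof -
  have "(\<Sum>x\<in>D. hnorm x) = (\<Sum>x\<in>D. \<Sum>i\<in>UNIV. if x $ i \<noteq> 0 then 1 else (0::nat))"
    unfolding hnorm_def by (simp add: sum.If_cases)
  also have "\<dots> = (\<Sum>i\<in>UNIV. \<Sum>x\<in>D. if x $ i \<noteq> 0 then 1 else (0::nat))"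
    by (rule sum.swap)
  also have "\<dots> = (\<Sum>i\<in>UNIV. card {x\<in>D. x $ i \<noteq> 0})"
    by (simp add: sum.If_cases Int_def conj_commute)
  also have "\<dots> = (\<Sum>i\<in>UNIV. if i \<in> csupp D then CARD('a) ^ r - CARD('a) ^ (r - 1) else 0)"
  proof (rule sum.cong[OF refl])
    fix i
    show "card {x\<in>D. x $ i \<noteq> 0} = (if i \<in> csupp D then CARD('a) ^ r - CARD('a) ^ (r - 1) else 0)"
    proof (cases "i \<in> csupp D")
      case True
      then obtain v where "v \<in> D" "v $ i \<noteq> 0" unfolding csupp_def by auto
      then show ?thesis using True card_nonzero_coord[OF D r] by simp
    next
      case False
      then have "{x\<in>D. x $ i \<noteq> 0} = {}" unfolding csupp_def by auto
      then show ?thesis using False by simp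
    qed
  qed
  also have "\<dots> = snorm D * (CARD('a) ^ r - CARD('a) ^ (r - 1))"
    by (simp add: sum.If_cases snorm_def)
  finally show ?thesis .
qed

lemma hnorm_zero_iff: "hnorm (x::'a::field ^ 'n::finite) = 0 \<longleftrightarrow> x = 0"
  unfolding hnorm_def by (auto simp: vec_eq_iff)

lemma lower_sum:
  fixes D :: "('a::{finite,field} ^ 'n) set" and h :: "('a ^ 'n) \<Rightarrow> nat"
  assumes z: "0 \<in> D" "h 0 = 0" and d1: "d \<ge> 1"
    and ge: "\<And>x. x \<in> D \<Longrightarrow> x \<noteq> 0 \<Longrightarrow> h x \<noteq> d \<Longrightarrow> h x \<ge> e"
  shows "d * card {x\<in>D. h x = d} + e * (card D - 1 - card {x\<in>D. h x = d}) \<le> (\<Sum>x\<in>D. h x)"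
proof -
  let ?A = "{x\<in>D. h x = d}"
  let ?R = "D - ?A - {0}"
  have fD: "finite D" by simp
  have A0: "0 \<notin> ?A" using z d1 by auto
  have split: "(\<Sum>x\<in>D. h x) = (\<Sum>x\<in>?A. h x) + (\<Sum>x\<in>D - ?A. h x)"
    using fD by (metis (no_types, lifting) Diff_subset mem_Collect_eq subsetI sum.subset_diff add.commute)
  have sA: "(\<Sum>x\<in>?A. h x) = d * card ?A" by simp
  have "(\<Sum>x\<in>D - ?A. h x) \<ge> (\<Sum>x\<in>?R. h x)"
    by (rule sum_mono2) auto
  moreover have "(\<Sum>x\<in>?R. h x) \<ge> (\<Sum>x\<in>?R. e)"
    by (rule sum_mono) (use ge in auto)
  moreover have "card ?R = card D - 1 - card ?A"
  proof -
    have "?R = D - insert 0 ?A" by auto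
    moreover have "card (insert 0 ?A) = card ?A + 1" using A0 by simp
    moreover have "insert 0 ?A \<subseteq> D" using z by auto
    ultimately show ?thesis using fD by (simp add: card_Diff_subset)
  qed
  ultimately show ?thesis using split sA by (simp add: mult.commute)
qed

theorem theorem4p2:
  fixes C :: "('a::{finite,field} ^ 'n) set" and k r :: nat
  assumes "vec.subspace C" and "vec.dim C = k"
    and "1 \<le> k" and "k \<le> CARD('n)"
    and "1 \<le> r" and "r \<le> k"
  shows "real (ghw C r) \<ge>
    (real (mindist C) * real (Delta_r C r)
      + real (e_C C) * (real CARD('a) ^ r - 1 - real (Delta_r C r)))
    / (real CARD('a) ^ r - real CARD('a) ^ (r - 1))"
proof -
  note C = assms(1)
  define q where "q = CARD('a)"
  define d where "d = mindist C"
  define e where "e = e_C C"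
  have q2: "q \<ge> 2"
  proof -
    have "card {0::'a, 1} \<le> card (UNIV::'a set)" by (rule card_mono) auto
    then show ?thesis unfolding q_def by simp
  qed
  obtain B where B: "B \<subseteq> C" "vec.independent B" "C \<subseteq> vec.span B" "card B = k"
    using vec.basis_exists assms(2) by blast
  obtain B' where B': "B' \<subseteq> B" "card B' = r"
    using obtain_subset_with_card_n[of r B] B(4) assms(6) by metis
  have iB': "vec.independent B'" using B(2) B'(1) vec.independent_mono by blast
  have Ex: "vec.span B' \<in> subcodes C r"
    unfolding subcodes_def using B'(1) B(1) C iB' B'(2)
    by (auto simp: vec.dim_eq_card_independent intro: vec.span_minimal[THEN subsetD])
  have "B \<noteq> {}" using B(4) assms(3) by auto
  then obtain b where b: "b \<in> C" "b \<noteq> 0" using B(1,2) vec.dependent_zero by blast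
  have HS: "{hnorm x | x. x \<in> C \<and> x \<noteq> 0} \<noteq> {}" "finite {hnorm x | x. x \<in> C \<and> x \<noteq> 0}"
    using b by auto
  have dmin: "\<And>x. x \<in> C \<Longrightarrow> x \<noteq> 0 \<Longrightarrow> d \<le> hnorm x"
    unfolding d_def mindist_def using HS by (auto intro!: Min_le)
  have "d \<in> {hnorm x | x. x \<in> C \<and> x \<noteq> 0}" unfolding d_def mindist_def using HS Min_in by blast
  then have d1: "d \<ge> 1" using hnorm_zero_iff by fastforce
  have emin: "\<And>x. x \<in> C \<Longrightarrow> x \<noteq> 0 \<Longrightarrow> hnorm x \<noteq> d \<Longrightarrow> e \<le> hnorm x"
  proof -
    fix x assume x: "x \<in> C" "x \<noteq> 0" "hnorm x \<noteq> d"
    then have "hnorm x \<in> S_C C" using dmin[OF x(1,2)] unfolding S_C_def d_def by force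
    moreover have "finite (S_C C)" unfolding S_C_def by simp
    ultimately show "e \<le> hnorm x" unfolding e_def e_C_def by auto
  qed
  have de: "d \<le> e"
  proof (cases "S_C C = {}")
    case False
    have "finite (S_C C)" unfolding S_C_def by simp
    then have "Min (S_C C) \<in> S_C C" using False Min_in by blast
    then show ?thesis unfolding e_def e_C_def S_C_def d_def using False by auto
  qed (simp add: e_def e_C_def d_def)
  have fsub: "finite (subcodes C r)" by simp
  have "ghw C r \<in> {snorm D | D. D \<in> subcodes C r}"
    unfolding ghw_def using Ex fsub by (intro Min_in) auto
  then obtain D where D: "D \<in> subcodes C r" "ghw C r = snorm D" by auto
  have Dsub: "vec.subspace D" "D \<subseteq> C" "vec.dim D = r" using D(1) unfolding subcodes_def by auto
  define a where "a = Delta C D"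
  define M where "M = Delta_r C r"
  have aM: "a \<le> M" unfolding a_def M_def Delta_r_def using D(1) fsub by (intro Max_ge) auto
  have cD: "card D = q ^ r" using card_subspace[OF Dsub(1)] Dsub(3) q_def by simp
  have low: "d * a + e * (card D - 1 - a) \<le> (\<Sum>x\<in>D. hnorm x)"
    unfolding a_def Delta_def d_def[symmetric]
    by (rule lower_sum) (use Dsub vec.subspace_0 d1 emin hnorm_zero_iff in auto)
  have sh: "(\<Sum>x\<in>D. hnorm x) = snorm D * (q ^ r - q ^ (r - 1))"
    using sum_hnorm[OF Dsub(1,3) assms(5)] q_def by simp
  have aD: "a \<le> card D - 1"
  proof -
    have "{x\<in>D. hnorm x = d} \<subseteq> D - {0}" using d1 by (auto simp: hnorm_def)
    then have "a \<le> card (D - {0})" unfolding a_def Delta_def d_def by (simp add: card_mono)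
    then show ?thesis by (simp add: Dsub(1) vec.subspace_0)
  qed
  have qle: "q ^ (r - 1) \<le> q ^ r" using q2 by (simp add: power_increasing)
  have qlt: "real q ^ (r - 1) < real q ^ r" using q2 assms(5) by (intro power_strict_increasing) auto
  have cD1: "card D \<ge> 1" using cD q2 by simp
  have R1: "real d * a + real e * (real q ^ r - 1 - a) \<le> real (snorm D) * (real q ^ r - real q ^ (r - 1))"
  proof -
    have "real (d * a + e * (card D - 1 - a)) \<le> real (snorm D * (q ^ r - q ^ (r - 1)))"
      using low sh by linarith
    then show ?thesis using aD cD1 cD qle by (simp add: of_nat_diff diff_diff_eq)
  qed
  have R2: "real d * M + real e * (real q ^ r - 1 - M) \<le> real d * a + real e * (real q ^ r - 1 - a)"
  proof -
    have "real d * M + real e * (real q ^ r - 1 - M) = real d * a + real e * (real q ^ r - 1 - a) - (real e - real d) * (real M - real a)"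
      by (simp add: algebra_simps)
    moreover have "(real e - real d) * (real M - real a) \<ge> 0" using de aM by simp
    ultimately show ?thesis by linarith
  qed
  have "(real d * M + real e * (real q ^ r - 1 - M)) / (real q ^ r - real q ^ (r - 1)) \<le> real (snorm D)"
    using R1 R2 qlt by (simp add: divide_le_eq)
  then show ?thesis unfolding q_def d_def e_def M_def D(2) by simp
qed

end
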